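(* Let $M$ be a monoid, and let $M^0$ be the monoid obtained from $M$ by adjoining a new element $0$ which acts as a zero element. Then $M$ is strongly hyperbolic if and only if $M^0$ is strongly hyperbolic.
   Context: Directed graphs may have loops and multiple edges; $d(u,v)$ is the length of a shortest directed path from $u$ to $v$ ($\infty$ if none). Out-ball $\overrightarrow{\mathcal{B}}_r(x)=\{y : d(x,y)\le r\}$, in-ball $\overleftarrow{\mathcal{B}}_r(x)=\{y : d(y,x)\le r\}$, extended to sets by union. A path $[x_0,\dots,x_n]$ is a geodesic if $n=d(x_0,x_n)$. A directed geodesic triangle is an ordered triple $(p,q,r)$ of geodesics with the end of $p$ equal to the start of $q$ and $p\circ q$ having the same start and end as $r$; it is $\delta$-thin if every vertex of $r$ lies in $\overrightarrow{\mathcal{B}}_\delta(p)\cup\overleftarrow{\mathcal{B}}_\delta(q)$, every vertex of $p$ lies in $\overrightarrow{\mathcal{B}}_\delta(r)\cup\overleftarrow{\mathcal{B}}_\delta(q)$, and every vertex of $q$ lies in $\overrightarrow{\mathcal{B}}_\delta(p)\cup\overleftarrow{\mathcal{B}}_\delta(r)$. A directed graph is strongly $\delta$-hyperbolic if all its directed geodesic triangles are $\delta$-thin. A monoid $M$ is strongly hyperbolic if there exist a finite generating set $A$ and $\delta\ge0$ such that its right Cayley graph w.r.t. $A$ (vertex set $M$, an edge $m\to n$ for each $a\in A$ with $ma=n$) is strongly $\delta$-hyperbolic. *)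

theory Defs
  imports Complex_Main "HOL-Library.Extended_Nat"
begin

text \<open>Only adjacency matters for vertex-paths, distances and geodesics, so a directed
  (multi)graph is represented by its edge relation E.\<close>

definition dpath :: "('v \<Rightarrow> 'v \<Rightarrow> bool) \<Rightarrow> 'v list \<Rightarrow> bool" where
  "dpath E xs \<longleftrightarrow> xs \<noteq> [] \<and> (\<forall>i. Suc i < length xs \<longrightarrow> E (xs ! i) (xs ! Suc i))"

definition ddist :: "('v \<Rightarrow> 'v \<Rightarrow> bool) \<Rightarrow> 'v \<Rightarrow> 'v \<Rightarrow> enat" where
  "ddist E u v =
     (if \<exists>xs. dpath E xs \<and> hd xs = u \<and> last xs = v
      then enat (LEAST n. \<exists>xs. dpath E xs \<and> hd xs = u \<and> last xs = v \<and> length xs = Suc n)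
      else \<infinity>)"

definition dist_le :: "enat \<Rightarrow> real \<Rightarrow> bool" where
  "dist_le d r \<longleftrightarrow> (\<exists>n. d = enat n \<and> real n \<le> r)"

definition out_ball :: "('v \<Rightarrow> 'v \<Rightarrow> bool) \<Rightarrow> real \<Rightarrow> 'v set \<Rightarrow> 'v set" where
  "out_ball E r S = {y. \<exists>x\<in>S. dist_le (ddist E x y) r}"

definition in_ball :: "('v \<Rightarrow> 'v \<Rightarrow> bool) \<Rightarrow> real \<Rightarrow> 'v set \<Rightarrow> 'v set" where
  "in_ball E r S = {y. \<exists>x\<in>S. dist_le (ddist E y x) r}"

definition geodesic :: "('v \<Rightarrow> 'v \<Rightarrow> bool) \<Rightarrow> 'v list \<Rightarrow> bool" where
  "geodesic E xs \<longleftrightarrow> dpath E xs \<and> enat (length xs - 1) = ddist E (hd xs) (last xs)"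

definition geodesic_triangle :: "('v \<Rightarrow> 'v \<Rightarrow> bool) \<Rightarrow> 'v list \<Rightarrow> 'v list \<Rightarrow> 'v list \<Rightarrow> bool" where
  "geodesic_triangle E p q r \<longleftrightarrow>
     geodesic E p \<and> geodesic E q \<and> geodesic E r \<and>
     last p = hd q \<and> hd r = hd p \<and> last r = last q"

definition thin_triangle :: "('v \<Rightarrow> 'v \<Rightarrow> bool) \<Rightarrow> real \<Rightarrow> 'v list \<Rightarrow> 'v list \<Rightarrow> 'v list \<Rightarrow> bool" where
  "thin_triangle E \<delta> p q r \<longleftrightarrow>
     set r \<subseteq> out_ball E \<delta> (set p) \<union> in_ball E \<delta> (set q) \<and>
     set p \<subseteq> out_ball E \<delta> (set r) \<union> in_ball E \<delta> (set q) \<and>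
     set q \<subseteq> out_ball E \<delta> (set p) \<union> in_ball E \<delta> (set r)"

definition strongly_hyperbolic_graph :: "('v \<Rightarrow> 'v \<Rightarrow> bool) \<Rightarrow> real \<Rightarrow> bool" where
  "strongly_hyperbolic_graph E \<delta> \<longleftrightarrow>
     (\<forall>p q r. geodesic_triangle E p q r \<longrightarrow> thin_triangle E \<delta> p q r)"

inductive_set generated :: "('m \<Rightarrow> 'm \<Rightarrow> 'm) \<Rightarrow> 'm \<Rightarrow> 'm set \<Rightarrow> 'm set"
  for mult :: "'m \<Rightarrow> 'm \<Rightarrow> 'm" and one :: 'm and A :: "'m set" where
  gen_one: "one \<in> generated mult one A"
| gen_step: "x \<in> generated mult one A \<Longrightarrow> a \<in> A \<Longrightarrow> mult x a \<in> generated mult one A"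

definition cayley :: "('m \<Rightarrow> 'm \<Rightarrow> 'm) \<Rightarrow> 'm set \<Rightarrow> 'm \<Rightarrow> 'm \<Rightarrow> bool" where
  "cayley mult A m n \<longleftrightarrow> (\<exists>a\<in>A. mult m a = n)"

definition strongly_hyperbolic_monoid :: "('m \<Rightarrow> 'm \<Rightarrow> 'm) \<Rightarrow> 'm \<Rightarrow> bool" where
  "strongly_hyperbolic_monoid mult one \<longleftrightarrow>
     (\<exists>A \<delta>. finite A \<and> generated mult one A = UNIV \<and> \<delta> \<ge> 0 \<and>
            strongly_hyperbolic_graph (cayley mult A) \<delta>)"

text \<open>M^0: adjoin a zero (represented by None) to the monoid M (elements Some m).\<close>

definition zero_mult :: "'a::monoid_mult option \<Rightarrow> 'a option \<Rightarrow> 'a option" where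
  "zero_mult x y = (case (x, y) of (Some a, Some b) \<Rightarrow> Some (a * b) | _ \<Rightarrow> None)"

end

theory Submission
  imports Defs
begin

abbreviation E0 :: "'a::monoid_mult option set \<Rightarrow> 'a option \<Rightarrow> 'a option \<Rightarrow> bool" where
  "E0 B \<equiv> cayley zero_mult B"

abbreviation E1 :: "'a::monoid_mult option set \<Rightarrow> 'a \<Rightarrow> 'a \<Rightarrow> bool" where
  "E1 B \<equiv> cayley (*) {a. Some a \<in> B}"

lemma E0_Some: "E0 B (Some m) (Some n) = E1 B m n"
  unfolding cayley_def zero_mult_def
  by (auto split: option.splits)

lemma E0_None: "E0 B None z \<Longrightarrow> z = None"
  unfolding cayley_def zero_mult_def by auto

lemma dpath_nonempty: "dpath E xs \<Longrightarrow> xs \<noteq> []"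
  by (simp add: dpath_def)

lemma None_last:
  assumes "dpath (E0 B) xs" "None \<in> set xs"
  shows "last xs = None"
proof -
  obtain i where i: "i < length xs" "xs ! i = None" using assms(2) by (metis in_set_conv_nth)
  have "\<forall>k. i + k < length xs \<longrightarrow> xs ! (i + k) = None"
  proof
    fix k show "i + k < length xs \<longrightarrow> xs ! (i + k) = None"
    proof (induction k)
      case 0 then show ?case using i by simp
    next
      case (Suc k)
      show ?case
      proof
        assume "i + Suc k < length xs"
        then have "xs ! (i + k) = None" "E0 B (xs ! (i+k)) (xs ! Suc (i+k))"
          using Suc assms(1) unfolding dpath_def by auto
        then show "xs ! (i + Suc k) = None" using E0_None by fastforce
      qed
    qed
  qed
  then have "i + (length xs - 1 - i) < length xs \<longrightarrow> xs ! (i + (length xs - 1 - i)) = None" by blast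
  moreover have "i + (length xs - 1 - i) = length xs - 1" using i by simp
  ultimately have "xs ! (length xs - 1) = None" using i by simp
  moreover have "xs \<noteq> []" using i by auto
  ultimately show ?thesis by (simp add: last_conv_nth)
qed

lemma dpath_map: "dpath (E0 B) (map Some xs) \<longleftrightarrow> dpath (E1 B) xs"
  unfolding dpath_def by (simp add: E0_Some)

lemma map_the_Some: "None \<notin> set xs \<Longrightarrow> map Some (map the xs) = xs"
  by (induct xs) auto

lemma key:
  "(\<exists>xs. dpath (E0 B) xs \<and> hd xs = Some x \<and> last xs = Some y \<and> length xs = n) \<longleftrightarrow>
   (\<exists>xs. dpath (E1 B) xs \<and> hd xs = x \<and> last xs = y \<and> length xs = n)"
proof
  assume "\<exists>xs. dpath (E0 B) xs \<and> hd xs = Some x \<and> last xs = Some y \<and> length xs = n"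
  then obtain xs where xs: "dpath (E0 B) xs" "hd xs = Some x" "last xs = Some y" "length xs = n" by blast
  have "None \<notin> set xs" using None_last[OF xs(1)] xs(3) by auto
  then have eq: "map Some (map the xs) = xs" by (rule map_the_Some)
  have ne: "xs \<noteq> []" using xs(1) dpath_nonempty by blast
  have "dpath (E1 B) (map the xs)" using xs(1) eq dpath_map by metis
  moreover have "hd (map the xs) = x" "last (map the xs) = y"
    using xs ne by (auto simp: hd_map last_map)
  ultimately show "\<exists>xs. dpath (E1 B) xs \<and> hd xs = x \<and> last xs = y \<and> length xs = n"
    using xs(4) by (metis length_map)
next
  assume "\<exists>xs. dpath (E1 B) xs \<and> hd xs = x \<and> last xs = y \<and> length xs = n"
  then obtain xs where xs: "dpath (E1 B) xs" "hd xs = x" "last xs = y" "length xs = n" by blast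
  have ne: "xs \<noteq> []" using xs(1) dpath_nonempty by blast
  show "\<exists>xs. dpath (E0 B) xs \<and> hd xs = Some x \<and> last xs = Some y \<and> length xs = n"
    by (rule exI[of _ "map Some xs"]) (use xs ne dpath_map in \<open>auto simp: hd_map last_map\<close>)
qed

lemma ddist_Some: "ddist (E0 B) (Some x) (Some y) = ddist (E1 B) x y"
proof -
  have ex: "(\<exists>xs. dpath (E0 B) xs \<and> hd xs = Some x \<and> last xs = Some y) \<longleftrightarrow>
            (\<exists>xs. dpath (E1 B) xs \<and> hd xs = x \<and> last xs = y)"
  proof
    assume "\<exists>xs. dpath (E0 B) xs \<and> hd xs = Some x \<and> last xs = Some y"
    then obtain xs where xs: "dpath (E0 B) xs \<and> hd xs = Some x \<and> last xs = Some y" by blast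
    have "\<exists>ys. dpath (E0 B) ys \<and> hd ys = Some x \<and> last ys = Some y \<and> length ys = length xs"
      using xs by blast
    then have "\<exists>ys. dpath (E1 B) ys \<and> hd ys = x \<and> last ys = y \<and> length ys = length xs"
      by (simp only: key)
    then show "\<exists>xs. dpath (E1 B) xs \<and> hd xs = x \<and> last xs = y" by blast
  next
    assume "\<exists>xs. dpath (E1 B) xs \<and> hd xs = x \<and> last xs = y"
    then obtain xs where xs: "dpath (E1 B) xs \<and> hd xs = x \<and> last xs = y" by blast
    have "\<exists>ys. dpath (E1 B) ys \<and> hd ys = x \<and> last ys = y \<and> length ys = length xs"
      using xs by blast
    then have "\<exists>ys. dpath (E0 B) ys \<and> hd ys = Some x \<and> last ys = Some y \<and> length ys = length xs"
      by (simp only: key)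
    then show "\<exists>xs. dpath (E0 B) xs \<and> hd xs = Some x \<and> last xs = Some y" by blast
  qed
  have l: "(\<lambda>n. \<exists>xs. dpath (E0 B) xs \<and> hd xs = Some x \<and> last xs = Some y \<and> length xs = Suc n) =
           (\<lambda>n. \<exists>xs. dpath (E1 B) xs \<and> hd xs = x \<and> last xs = y \<and> length xs = Suc n)"
    by (rule ext) (rule key)
  show ?thesis unfolding ddist_def ex l by (rule refl)
qed

lemma ddist_le: "dpath E xs \<Longrightarrow> ddist E (hd xs) (last xs) \<le> enat (length xs - 1)"
proof -
  assume a: "dpath E xs"
  then have ne: "xs \<noteq> []" by (rule dpath_nonempty)
  have "(LEAST n. \<exists>ys. dpath E ys \<and> hd ys = hd xs \<and> last ys = last xs \<and> length ys = Suc n) \<le> length xs - 1"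
    by (rule Least_le) (use a ne in auto)
  then show ?thesis using a unfolding ddist_def by auto
qed

lemma geodesic_map: "geodesic (E0 B) (map Some xs) \<longleftrightarrow> geodesic (E1 B) xs"
proof (cases "xs = []")
  case True then show ?thesis by (simp add: geodesic_def dpath_def)
next
  case False then show ?thesis
    by (simp add: geodesic_def dpath_map hd_map last_map ddist_Some)
qed

lemma out_ball_Some: "Some y \<in> out_ball (E0 B) d (Some ` S) \<longleftrightarrow> y \<in> out_ball (E1 B) d S"
  by (auto simp: out_ball_def ddist_Some)

lemma in_ball_Some: "Some y \<in> in_ball (E0 B) d (Some ` S) \<longleftrightarrow> y \<in> in_ball (E1 B) d S"
  by (auto simp: in_ball_def ddist_Some)

lemma sub_Some:
  "Some ` R \<subseteq> out_ball (E0 B) d (Some ` P) \<union> in_ball (E0 B) d (Some ` Q) \<longleftrightarrow>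
   R \<subseteq> out_ball (E1 B) d P \<union> in_ball (E1 B) d Q"
  using out_ball_Some[of _ B d] in_ball_Some[of _ B d] by blast

lemma thin_map:
  "thin_triangle (E0 B) d (map Some p) (map Some q) (map Some r) \<longleftrightarrow> thin_triangle (E1 B) d p q r"
  unfolding thin_triangle_def by (simp add: sub_Some)

lemma tri_map:
  "geodesic_triangle (E0 B) (map Some p) (map Some q) (map Some r) \<longleftrightarrow> geodesic_triangle (E1 B) p q r"
proof -
  have "geodesic (E1 B) xs \<Longrightarrow> xs \<noteq> []" for xs
    by (auto simp: geodesic_def dpath_def)
  then show ?thesis unfolding geodesic_triangle_def geodesic_map
    by (auto simp: hd_map last_map)
qed

lemma dist_le_mono: "dist_le d r \<Longrightarrow> r \<le> s \<Longrightarrow> dist_le d s"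
  unfolding dist_le_def by auto

lemma thin_mono: "thin_triangle E d p q r \<Longrightarrow> d \<le> d' \<Longrightarrow> thin_triangle E d' p q r"
  unfolding thin_triangle_def out_ball_def in_ball_def
  using dist_le_mono by blast

lemma gen_back:
  "x \<in> generated zero_mult (Some 1) B \<Longrightarrow> x = Some a \<Longrightarrow> a \<in> generated (*) 1 {a. Some a \<in> B}"
proof (induction x arbitrary: a rule: generated.induct)
  case gen_one then show ?case by (auto intro: generated.gen_one)
next
  case (gen_step x b)
  then obtain c d where "x = Some c" "b = Some d" "a = c * d"
    by (auto simp: zero_mult_def split: option.splits)
  then show ?case using gen_step by (auto intro: generated.gen_step)
qed

lemma gen_fwd:
  "x \<in> generated (*) 1 A \<Longrightarrow> Some x \<in> generated zero_mult (Some 1) (Some ` A \<union> {None})"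
proof (induction x rule: generated.induct)
  case gen_one then show ?case by (auto intro: generated.gen_one)
next
  case (gen_step x a)
  have "zero_mult (Some x) (Some a) \<in> generated zero_mult (Some 1) (Some ` A \<union> {None})"
    by (rule generated.gen_step) (use gen_step in auto)
  moreover have "zero_mult (Some x) (Some a) = Some (x * a)" by (simp add: zero_mult_def)
  ultimately show ?case by simp
qed

lemma to_None:
  assumes "None \<in> B" and that: "1 \<le> d'"
  shows "dist_le (ddist (E0 B) v None) d'"
proof -
  have "ddist (E0 B) v None \<le> enat 1"
  proof (cases v)
    case None
    have "dpath (E0 B) [None]" by (simp add: dpath_def)
    from ddist_le[OF this] None have "ddist (E0 B) v None \<le> enat 0" by simp
    then show ?thesis by (rule order_trans) simp
  next
    case (Some m)
    have "E0 B (Some m) None" using assms unfolding cayley_def zero_mult_def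
      by (intro bexI[of _ None]) auto
    then have "dpath (E0 B) [Some m, None]" by (auto simp: dpath_def nth_Cons split: nat.splits)
    from ddist_le[OF this] Some show ?thesis by simp
  qed
  moreover from enat_ile[OF this] obtain n where "ddist (E0 B) v None = enat n" by blast
  ultimately have "ddist (E0 B) v None = enat n" "n \<le> 1" by auto
  then show ?thesis using that unfolding dist_le_def by auto
qed

theorem proposition4p7:
  shows "strongly_hyperbolic_monoid ((*) :: 'a::monoid_mult \<Rightarrow> 'a \<Rightarrow> 'a) 1 \<longleftrightarrow>
         strongly_hyperbolic_monoid (zero_mult :: 'a option \<Rightarrow> 'a option \<Rightarrow> 'a option) (Some 1)"
proof
  assume "strongly_hyperbolic_monoid ((*) :: 'a \<Rightarrow> 'a \<Rightarrow> 'a) 1"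
  then obtain A and \<delta> :: real where A: "finite A" "generated (*) (1::'a) A = UNIV" "\<delta> \<ge> 0"
    "strongly_hyperbolic_graph (cayley (*) A) \<delta>"
    unfolding strongly_hyperbolic_monoid_def by blast
  define B where "B = Some ` A \<union> {None}"
  have BA: "{a. Some a \<in> B} = A" by (auto simp: B_def)
  have fB: "finite B" using A(1) by (simp add: B_def)
  have gB: "generated zero_mult (Some 1) B = UNIV"
  proof -
    have "x \<in> generated zero_mult (Some 1) B" for x
    proof (cases x)
      case None
      have "zero_mult (Some 1) None \<in> generated zero_mult (Some (1::'a)) B"
        by (rule generated.gen_step) (auto simp: B_def intro: generated.gen_one)
      then show ?thesis using None by (simp add: zero_mult_def)
    next
      case (Some a) then show ?thesis using gen_fwd[of a A] A(2) B_def by auto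
    qed
    then show ?thesis by auto
  qed
  have NB: "None \<in> B" by (simp add: B_def)
  have hyp: "strongly_hyperbolic_graph (E0 B) (max \<delta> 1)"
    unfolding strongly_hyperbolic_graph_def
  proof (intro allI impI)
    fix p q r assume T: "geodesic_triangle (E0 B) p q r"
    then have dp: "dpath (E0 B) p" "dpath (E0 B) q" "dpath (E0 B) r"
      and lk: "last p = hd q" "hd r = hd p" "last r = last q"
      by (auto simp: geodesic_triangle_def geodesic_def)
    show "thin_triangle (E0 B) (max \<delta> 1) p q r"
    proof (cases "None \<in> set p \<or> None \<in> set q \<or> None \<in> set r")
      case True
      have nq: "q \<noteq> []" "r \<noteq> []" using dp dpath_nonempty by auto
      have Nq: "None \<in> set q"
      proof -
        { assume "None \<in> set p"
          then have "last p = None" using None_last[OF dp(1)] by simp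
          then have "hd q = None" using lk(1) by simp
          then have ?thesis using hd_in_set[OF nq(1)] by simp }
        moreover
        { assume "None \<in> set r"
          then have "last r = None" using None_last[OF dp(3)] by simp
          then have "last q = None" using lk(3) by simp
          then have ?thesis using last_in_set[OF nq(1)] by simp }
        ultimately show ?thesis using True by blast
      qed
      then have "last q = None" using None_last[OF dp(2)] by simp
      then have "last r = None" using lk(3) by simp
      then have Nr: "None \<in> set r" using last_in_set[OF nq(2)] by simp
      have IB: "v \<in> in_ball (E0 B) (max \<delta> 1) S" if "None \<in> S" for v S
        using that to_None[OF NB, of "max \<delta> 1" v] unfolding in_ball_def by auto
      have "set X \<subseteq> in_ball (E0 B) (max \<delta> 1) (set q)" for X :: "'a option list"
        using IB[OF Nq] by blast
      moreover have "set X \<subseteq> in_ball (E0 B) (max \<delta> 1) (set r)" for X :: "'a option list"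
        using IB[OF Nr] by blast
      ultimately show ?thesis unfolding thin_triangle_def by blast
    next
      case False
      then have eqs: "map Some (map the p) = p" "map Some (map the q) = q" "map Some (map the r) = r"
        using map_the_Some[of p] map_the_Some[of q] map_the_Some[of r] by auto
      have "geodesic_triangle (E0 B) (map Some (map the p)) (map Some (map the q)) (map Some (map the r))"
        using T by (simp only: eqs)
      then have "geodesic_triangle (E1 B) (map the p) (map the q) (map the r)"
        by (simp only: tri_map)
      then have "thin_triangle (E1 B) \<delta> (map the p) (map the q) (map the r)"
        using A(4) BA unfolding strongly_hyperbolic_graph_def by simp
      then have "thin_triangle (E0 B) \<delta> (map Some (map the p)) (map Some (map the q)) (map Some (map the r))"
        by (simp only: thin_map)
      then have "thin_triangle (E0 B) \<delta> p q r" by (simp only: eqs)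
      then show ?thesis by (rule thin_mono) simp
    qed
  qed
  show "strongly_hyperbolic_monoid (zero_mult :: 'a option \<Rightarrow> 'a option \<Rightarrow> 'a option) (Some 1)"
    unfolding strongly_hyperbolic_monoid_def
    using fB gB hyp A(3) by (intro exI[of _ B] exI[of _ "max \<delta> 1"]) auto
next
  assume "strongly_hyperbolic_monoid (zero_mult :: 'a option \<Rightarrow> 'a option \<Rightarrow> 'a option) (Some 1)"
  then obtain B and \<delta> :: real where B: "finite B" "generated zero_mult (Some (1::'a)) B = UNIV" "\<delta> \<ge> 0"
    "strongly_hyperbolic_graph (E0 B) \<delta>"
    unfolding strongly_hyperbolic_monoid_def by blast
  have fA: "finite {a. Some a \<in> B}"
    using finite_vimageI[OF B(1), of Some] by (simp add: vimage_def)
  have gA: "generated (*) 1 {a. Some a \<in> B} = UNIV"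
    using gen_back B(2) by blast
  have "strongly_hyperbolic_graph (E1 B) \<delta>"
    unfolding strongly_hyperbolic_graph_def
  proof (intro allI impI)
    fix p q r assume "geodesic_triangle (E1 B) p q r"
    then have "geodesic_triangle (E0 B) (map Some p) (map Some q) (map Some r)" by (simp add: tri_map)
    then show "thin_triangle (E1 B) \<delta> p q r"
      using B(4) thin_map unfolding strongly_hyperbolic_graph_def by blast
  qed
  then show "strongly_hyperbolic_monoid ((*) :: 'a \<Rightarrow> 'a \<Rightarrow> 'a) 1"
    unfolding strongly_hyperbolic_monoid_def using fA gA B(3)
    by (intro exI[of _ "{a. Some a \<in> B}"] exI[of _ \<delta>]) simp
qed

end
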